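(* There is an absolute constant $c_0>0$ such that the following holds. Let $\alpha\in(0,\tfrac12)$, $\beta\in(0,1)$, and let $G$ be a graph on $n$ vertices with at least $\alpha n^2$ edges. Then either $G$ contains at least $c_0\alpha^{80}\beta^{20}n^4$ induced copies of $C_4$, or there is a set $X\subseteq V(G)$ with $|X|\ge0.1\alpha^2n$ and $d(X)\ge1-\beta$.
   Context: For a nonempty $X\subseteq V(G)$ (with $|X|\ge 2$), $d(X)=e(X)/\binom{|X|}{2}$, where $e(X)$ is the number of edges of $G$ with both endpoints in $X$. An induced copy of $C_4$ is a set of $4$ vertices inducing a $4$-cycle. *)

theory Defs
  imports Main Complex_Main
begin

definition simple_graph :: "'a set \<Rightarrow> ('a \<Rightarrow> 'a \<Rightarrow> bool) \<Rightarrow> bool" where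
  "simple_graph V E \<longleftrightarrow> finite V \<and> (\<forall>u v. E u v \<longrightarrow> E v u) \<and> (\<forall>u. \<not> E u u)"

definition edges_in :: "('a \<Rightarrow> 'a \<Rightarrow> bool) \<Rightarrow> 'a set \<Rightarrow> 'a set set" where
  "edges_in E X = {{u, v} | u v. u \<in> X \<and> v \<in> X \<and> E u v}"

definition e_count :: "('a \<Rightarrow> 'a \<Rightarrow> bool) \<Rightarrow> 'a set \<Rightarrow> nat" where
  "e_count E X = card (edges_in E X)"

definition density :: "('a \<Rightarrow> 'a \<Rightarrow> bool) \<Rightarrow> 'a set \<Rightarrow> real" where
  "density E X = real (e_count E X) / real (card X choose 2)"

definition induced_C4 :: "'a set \<Rightarrow> ('a \<Rightarrow> 'a \<Rightarrow> bool) \<Rightarrow> 'a set \<Rightarrow> bool" where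
  "induced_C4 V E S \<longleftrightarrow> S \<subseteq> V \<and> (\<exists>a b c d. S = {a, b, c, d} \<and> distinct [a, b, c, d] \<and>
     E a b \<and> E b c \<and> E c d \<and> E d a \<and> \<not> E a c \<and> \<not> E b d)"

definition num_induced_C4 :: "'a set \<Rightarrow> ('a \<Rightarrow> 'a \<Rightarrow> bool) \<Rightarrow> nat" where
  "num_induced_C4 V E = card {S. induced_C4 V E S}"

end

theory Submission
  imports Defs
begin


definition oe :: "('a \<Rightarrow> 'a \<Rightarrow> bool) \<Rightarrow> 'a set \<Rightarrow> ('a \<times> 'a) set" where
  "oe E S = {(u,w). u \<in> S \<and> w \<in> S \<and> E u w}"

lemma handshake:
  assumes fin: "finite S" and sym: "\<forall>u v. E u v \<longrightarrow> E v u" and irr: "\<forall>u. \<not> E u u"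
  shows "card (oe E S) = 2 * e_count E S"
proof -
  let ?g = "\<lambda>p::'a\<times>'a. {fst p, snd p}"
  have finD: "finite (oe E S)" unfolding oe_def
    by (rule finite_subset[of _ "S \<times> S"]) (use fin in auto)
  have img: "?g ` oe E S \<subseteq> edges_in E S" unfolding oe_def edges_in_def by fastforce
  have finR: "finite (edges_in E S)"
  proof -
    have "edges_in E S \<subseteq> Pow S" unfolding edges_in_def by auto
    then show ?thesis using fin finite_subset by blast
  qed
  have "(\<Sum>x \<in> oe E S. (1::nat)) = (\<Sum>y \<in> edges_in E S. of_nat (card {x \<in> oe E S. ?g x = y}) * 1)"
    using sum_fun_comp[OF finD finR img, of "\<lambda>_. (1::nat)"] by simp
  also have "\<dots> = (\<Sum>y \<in> edges_in E S. 2)"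
  proof (rule sum.cong)
    fix y assume "y \<in> edges_in E S"
    then obtain a b where y: "y = {a,b}" "a \<in> S" "b \<in> S" "E a b" unfolding edges_in_def by auto
    have ab: "a \<noteq> b" using y irr by auto
    have "{x \<in> oe E S. ?g x = y} = {(a,b),(b,a)}"
      using y sym unfolding oe_def by (auto simp: doubleton_eq_iff)
    then show "of_nat (card {x \<in> oe E S. ?g x = y}) * 1 = (2::nat)" using ab by simp
  qed simp
  finally show ?thesis unfolding e_count_def by simp
qed

definition nb :: "('a \<Rightarrow> 'a \<Rightarrow> bool) \<Rightarrow> 'a set \<Rightarrow> 'a \<Rightarrow> 'a set" where
  "nb E V x = {y \<in> V. E x y}"
definition NP :: "('a \<Rightarrow> 'a \<Rightarrow> bool) \<Rightarrow> 'a set \<Rightarrow> ('a \<times> 'a) set" where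
  "NP E S = {(u,w). u \<in> S \<and> w \<in> S \<and> u \<noteq> w \<and> \<not> E u w}"

lemma real_choose2: "real (n choose 2) * 2 = real n * (real n - 1)"
proof -
  have "even (n * (n - 1))" by auto
  then have e: "(n choose 2) * 2 = n * (n - 1)" unfolding choose_two by simp
  show ?thesis
  proof (cases n)
    case 0 then show ?thesis by simp
  next
    case (Suc m)
    then have "real ((n choose 2) * 2) = real (Suc m * m)" using e by simp
    then show ?thesis using Suc by (simp add: algebra_simps)
  qed
qed
lemma NP_oe_card:
  assumes fin: "finite S" and irr: "\<forall>u. \<not> E u u"
  shows "real (card (NP E S)) + real (card (oe E S)) = real (card S) * (real (card S) - 1)"
proof -
  let ?D = "{p \<in> S \<times> S. fst p \<noteq> snd p}"
  have un: "?D = NP E S \<union> oe E S" using irr unfolding NP_def oe_def by auto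
  have dis: "NP E S \<inter> oe E S = {}" unfolding NP_def oe_def by auto
  have f1: "finite (NP E S)" by (rule finite_subset[of _ "S \<times> S"]) (auto simp: NP_def fin)
  have f2: "finite (oe E S)" by (rule finite_subset[of _ "S \<times> S"]) (auto simp: oe_def fin)
  have c1: "card ?D = card (NP E S) + card (oe E S)"
    unfolding un by (rule card_Un_disjoint[OF f1 f2 dis])
  have sp: "S \<times> S = ?D \<union> (\<lambda>x. (x,x)) ` S" by auto
  have c2: "card (?D \<union> (\<lambda>x. (x,x)) ` S) = card ?D + card ((\<lambda>x. (x,x)) ` S)"
    by (rule card_Un_disjoint) (use fin in auto)
  have c3: "card ((\<lambda>x. (x,x)) ` S) = card S" by (rule card_image) (auto simp: inj_on_def)
  have "card S * card S = card (NP E S) + card (oe E S) + card S"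
    using c1 c2 c3 sp by (metis card_cartesian_product)
  then have "real (card S) * real (card S) = real (card (NP E S)) + real (card (oe E S)) + real (card S)"
    by (metis of_nat_add of_nat_mult)
  then show ?thesis by (simp add: algebra_simps)
qed
lemma NP_lower:
  assumes fin: "finite V" and sym: "\<forall>u v. E u v \<longrightarrow> E v u" and irr: "\<forall>u. \<not> E u u"
    and nd: "\<forall>X. X \<subseteq> V \<and> card X \<ge> 2 \<and> real (card X) \<ge> T \<longrightarrow> density E X < 1 - \<beta>"
    and SV: "S \<subseteq> V" and ST: "real (card S) \<ge> T" and b: "0 < \<beta>"
  shows "real (card (NP E S)) \<ge> \<beta> * real (card S) * (real (card S) - 1)"
proof (cases "card S \<ge> 2")
  case False
  then have "card S = 0 \<or> card S = 1" by auto
  then show ?thesis by auto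
next
  case True
  have finS: "finite S" using fin SV finite_subset by blast
  have "density E S < 1 - \<beta>" using nd SV True ST by blast
  moreover have pos: "real (card S choose 2) > 0" using True by simp
  ultimately have "real (e_count E S) < (1 - \<beta>) * real (card S choose 2)"
    unfolding density_def using pos_divide_less_eq by blast
  then have "2 * real (e_count E S) < (1 - \<beta>) * (real (card S choose 2) * 2)"
    by linarith
  then have A: "2 * real (e_count E S) < (1 - \<beta>) * (real (card S) * (real (card S) - 1))"
    using real_choose2[of "card S"] by simp
  have B: "real (card (oe E S)) = 2 * real (e_count E S)"
    using handshake[OF finS sym irr] by simp
  note C = NP_oe_card[of S E, OF finS irr]
  have D: "\<beta> * real (card S) * (real (card S) - 1) = real (card S) * (real (card S) - 1) - (1 - \<beta>) * (real (card S) * (real (card S) - 1))"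
    by (simp add: algebra_simps)
  show ?thesis using A B C D by linarith
qed




lemma double_count:
  assumes fin: "finite V" and Z: "finite Z" and ZV: "Z \<subseteq> V \<times> V" and sym: "\<forall>u v. E u v \<longrightarrow> E v u"
  shows "(\<Sum>p\<in>Z. card (nb E V (fst p) \<inter> nb E V (snd p)))
       = (\<Sum>x\<in>V. card {p\<in>Z. fst p \<in> nb E V x \<and> snd p \<in> nb E V x})"
proof -
  have l: "nb E V (fst p) \<inter> nb E V (snd p) = {x. x\<in>V \<and> (fst p \<in> nb E V x \<and> snd p \<in> nb E V x)}" if "p \<in> Z" for p
  proof -
    have "fst p \<in> V" "snd p \<in> V" using that ZV by auto
    then show ?thesis unfolding nb_def using sym by auto
  qed
  have "(\<Sum>p\<in>Z. (\<Sum>x\<in>{x. x\<in>V \<and> (fst p \<in> nb E V x \<and> snd p \<in> nb E V x)}. (1::nat)))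
      = (\<Sum>x\<in>V. (\<Sum>p\<in>{p. p\<in>Z \<and> (fst p \<in> nb E V x \<and> snd p \<in> nb E V x)}. 1))"
    by (rule sum.swap_restrict[OF Z fin])
  then have "(\<Sum>p\<in>Z. card {x. x\<in>V \<and> (fst p \<in> nb E V x \<and> snd p \<in> nb E V x)})
      = (\<Sum>x\<in>V. card {p. p\<in>Z \<and> (fst p \<in> nb E V x \<and> snd p \<in> nb E V x)})"
    by (simp only: card_eq_sum)
  moreover have "(\<Sum>p\<in>Z. card (nb E V (fst p) \<inter> nb E V (snd p))) = (\<Sum>p\<in>Z. card {x. x\<in>V \<and> (fst p \<in> nb E V x \<and> snd p \<in> nb E V x)})"
    by (rule sum.cong) (simp_all only: l)
  ultimately show ?thesis by simp
qed

lemma degree_sum: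
  assumes fin: "finite V"
  shows "(\<Sum>x\<in>V. card (nb E V x)) = card (oe E V)"
proof -
  have e: "oe E V = Sigma V (nb E V)" unfolding oe_def nb_def by auto
  have "card (Sigma V (nb E V)) = (\<Sum>x\<in>V. card (nb E V x))"
    by (rule card_SigmaI) (use fin in \<open>auto simp: nb_def\<close>)
  then show ?thesis using e by simp
qed

lemma finite_NP: "finite S \<Longrightarrow> finite (NP E S)"
  by (rule finite_subset[of _ "S \<times> S"]) (auto simp: NP_def)




lemma C4_count:
  assumes fin: "finite V" and sym: "\<forall>u v. E u v \<longrightarrow> E v u" and irr: "\<forall>u. \<not> E u u"
  shows "(\<Sum>p\<in>NP E V. card (NP E (nb E V (fst p) \<inter> nb E V (snd p)))) \<le> 256 * num_induced_C4 V E"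
proof -
  let ?Tup = "Sigma (NP E V) (\<lambda>p. NP E (nb E V (fst p) \<inter> nb E V (snd p)))"
  let ?C = "{S. induced_C4 V E S}"
  have finC: "finite ?C"
    by (rule finite_subset[of _ "Pow V"]) (use fin in \<open>auto simp: induced_C4_def\<close>)
  have c1: "card ?Tup = (\<Sum>p\<in>NP E V. card (NP E (nb E V (fst p) \<inter> nb E V (snd p))))"
    by (rule card_SigmaI) (use fin in \<open>auto intro!: finite_NP simp: nb_def\<close>)
  have sub: "?Tup \<subseteq> (\<Union>S\<in>?C. (S \<times> S) \<times> (S \<times> S))"
  proof
    fix t assume t: "t \<in> ?Tup"
    then obtain u w x y where tt: "t = ((u,w),(x,y))" by (metis prod.collapse)
    from t tt have h: "u \<in> V" "w \<in> V" "u \<noteq> w" "\<not> E u w" "x \<in> V" "y \<in> V" "E u x" "E w x" "E u y" "E w y"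
      "x \<noteq> y" "\<not> E x y"
      by (auto simp: NP_def nb_def)
    have "induced_C4 V E {u,x,w,y}"
      unfolding induced_C4_def
    proof (intro conjI exI)
      show "{u,x,w,y} \<subseteq> V" using h by auto
      show "distinct [u,x,w,y]" using h irr by auto
    qed (use h sym in auto)
    then show "t \<in> (\<Union>S\<in>?C. (S \<times> S) \<times> (S \<times> S))" using tt by blast
  qed
  have c4: "card ((S \<times> S) \<times> (S \<times> S)) = 256" if "S \<in> ?C" for S
  proof -
    from that obtain a b c d where "S = {a,b,c,d}" "distinct [a,b,c,d]" unfolding induced_C4_def by auto
    then have "card S = 4" by simp
    then show ?thesis by (simp add: card_cartesian_product)
  qed
  have "card ?Tup \<le> card (\<Union>S\<in>?C. (S \<times> S) \<times> (S \<times> S))"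
    by (rule card_mono) (use finC sub in \<open>auto simp: induced_C4_def intro: finite_subset[OF _ fin]\<close>)
  also have "\<dots> \<le> (\<Sum>S\<in>?C. card ((S \<times> S) \<times> (S \<times> S)))" by (rule card_UN_le[OF finC])
  also have "\<dots> = (\<Sum>S\<in>?C. 256)" using c4 by simp
  also have "\<dots> = 256 * num_induced_C4 V E" unfolding num_induced_C4_def by simp
  finally show ?thesis using c1 by simp
qed



lemma perx:
  fixes T \<beta> :: real
  assumes fin: "finite V" and sym: "\<forall>u v. E u v \<longrightarrow> E v u" and irr: "\<forall>u. \<not> E u u"
    and nd: "\<forall>X. X \<subseteq> V \<and> card X \<ge> 2 \<and> real (card X) \<ge> T \<longrightarrow> density E X < 1 - \<beta>"
    and T2: "T \<ge> 2" and b: "0 < \<beta>"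
    and dT: "real (card (nb E V x)) \<ge> 4 * T"
  shows "(real (card (nb E V x)) - 1)^2 \<le>
     real (card {p \<in> {p \<in> NP E V. real (card (nb E V (fst p) \<inter> nb E V (snd p))) \<ge> T}.
                 fst p \<in> nb E V x \<and> snd p \<in> nb E V x}) / \<beta>
     + 8 * real (card (NP E (nb E V x)))"
proof -
  define A where "A = nb E V x"
  define d where "d = real (card A)"
  define h where "h = (d - T - 2) / 2"
  define nn where "nn u = {w \<in> A. w \<noteq> u \<and> \<not> E u w}" for u
  define W where "W = {u \<in> A. real (card (nn u)) \<ge> h}"
  define A' where "A' = A - W"
  define Pn where "Pn = real (card (NP E A))"
  define B where "B = {p \<in> NP E V. real (card (nb E V (fst p) \<inter> nb E V (snd p))) \<ge> T}"
  define PB where "PB = real (card {p \<in> B. fst p \<in> A \<and> snd p \<in> A})"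
  have AV: "A \<subseteq> V" unfolding A_def nb_def by auto
  have finA: "finite A" using AV fin finite_subset by blast
  have d4: "d \<ge> 4 * T" using dT unfolding d_def A_def .
  have hd: "h \<ge> d / 4" unfolding h_def using d4 T2 by simp
  have hpos: "h > 0" using hd d4 T2 by simp
  have WA: "W \<subseteq> A" unfolding W_def by auto
  have finW: "finite W" using WA finA finite_subset by blast
  have NPsig: "NP E A = Sigma A nn" unfolding NP_def nn_def by auto
  have finnn: "finite (nn u)" for u unfolding nn_def using finA by simp
  have e1: "real (card (NP E A)) = (\<Sum>u\<in>A. real (card (nn u)))"
  proof -
    have "card (Sigma A nn) = (\<Sum>u\<in>A. card (nn u))" using card_SigmaI[OF finA] finnn by blast
    then show ?thesis unfolding NPsig by simp
  qed
  have e2: "(\<Sum>u\<in>A. real (card (nn u))) \<ge> (\<Sum>u\<in>W. real (card (nn u)))"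
    by (rule sum_mono2[OF finA WA]) simp
  have e3: "(\<Sum>u\<in>W. real (card (nn u))) \<ge> real (card W) * h"
    by (rule sum_bounded_below) (simp add: W_def)
  have Wb: "real (card W) * h \<le> Pn" unfolding Pn_def using e1 e2 e3 by linarith
  have Wb2: "d * real (card W) \<le> 4 * Pn"
  proof -
    have "d * real (card W) \<le> (4 * h) * real (card W)" using hd by (intro mult_right_mono) auto
    moreover have "4 * h * real (card W) = 4 * (real (card W) * h)" by simp
    ultimately show ?thesis using Wb by linarith
  qed
  have nbu: "real (card (A \<inter> nb E V u)) > d - 1 - h" if "u \<in> A'" for u
  proof -
    have uA: "u \<in> A" and un: "real (card (nn u)) < h" using that unfolding A'_def W_def by auto
    have "A \<subseteq> {u} \<union> (A \<inter> nb E V u) \<union> nn u" using AV unfolding nn_def nb_def by auto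
    then have "card A \<le> card ({u} \<union> (A \<inter> nb E V u) \<union> nn u)" by (rule card_mono[rotated]) (use finA finnn in auto)
    also have "\<dots> \<le> card ({u} \<union> (A \<inter> nb E V u)) + card (nn u)" by (rule card_Un_le)
    also have "\<dots> \<le> 1 + card (A \<inter> nb E V u) + card (nn u)" using card_Un_le[of "{u}" "A \<inter> nb E V u"] by simp
    finally have "d \<le> 1 + real (card (A \<inter> nb E V u)) + real (card (nn u))" unfolding d_def by linarith
    then show ?thesis using un by linarith
  qed
  have cod: "real (card (nb E V u \<inter> nb E V w)) \<ge> T" if "u \<in> A'" "w \<in> A'" for u w
  proof -
    let ?X = "A \<inter> nb E V u" and ?Y = "A \<inter> nb E V w"
    have fX: "finite ?X" "finite ?Y" using finA by auto
    have "card (?X \<union> ?Y) + card (?X \<inter> ?Y) = card ?X + card ?Y" using card_Un_Int[OF fX] by simp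
    moreover have "card (?X \<union> ?Y) \<le> card A" by (rule card_mono[OF finA]) auto
    moreover have "card (?X \<inter> ?Y) \<le> card (nb E V u \<inter> nb E V w)"
      by (rule card_mono) (use fin in \<open>auto simp: nb_def\<close>)
    ultimately have "real (card ?X) + real (card ?Y) \<le> d + real (card (nb E V u \<inter> nb E V w))"
      unfolding d_def by linarith
    moreover have "(d - 1 - h) + (d - 1 - h) = d + T" unfolding h_def by (simp add: field_simps)
    ultimately show ?thesis using nbu[OF that(1)] nbu[OF that(2)] by linarith
  qed
  have sub: "NP E A' \<subseteq> {p \<in> B. fst p \<in> A \<and> snd p \<in> A}"
  proof
    fix p assume p: "p \<in> NP E A'"
    then obtain u w where pu: "p = (u,w)" "u \<in> A'" "w \<in> A'" "u \<noteq> w" "\<not> E u w" unfolding NP_def by auto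
    have "u \<in> A" "w \<in> A" using pu unfolding A'_def by auto
    then show "p \<in> {p \<in> B. fst p \<in> A \<and> snd p \<in> A}"
      using pu cod[OF pu(2,3)] AV unfolding B_def NP_def by auto
  qed
  have finB: "finite {p \<in> B. fst p \<in> A \<and> snd p \<in> A}"
    by (rule finite_subset[of _ "A \<times> A"]) (use finA in auto)
  have PBge: "PB \<ge> real (card (NP E A'))" unfolding PB_def using card_mono[OF finB sub] by simp
  have cA': "real (card A') = d - real (card W)"
    unfolding A'_def d_def using card_Diff_subset[OF finW WA] card_mono[OF finA WA] by simp
  have Pn0: "Pn \<ge> 0" unfolding Pn_def by simp
  have PB0: "PB \<ge> 0" unfolding PB_def by simp
  have d0: "d \<ge> 8" using d4 T2 by simp
  show ?thesis
  proof (cases "real (card A') \<ge> T")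
    case True
    have A'V: "A' \<subseteq> V" using AV unfolding A'_def by auto
    have "real (card (NP E A')) \<ge> \<beta> * real (card A') * (real (card A') - 1)"
      by (rule NP_lower[OF fin sym irr nd A'V True b])
    then have "PB / \<beta> \<ge> real (card A') * (real (card A') - 1)"
      using PBge b by (simp add: pos_le_divide_eq mult.commute mult.left_commute)
    moreover have "real (card A') * (real (card A') - 1) \<ge> (d - 1)^2 - 8 * Pn"
    proof -
      define w where "w = real (card W)"
      have w0: "w \<ge> 0" unfolding w_def by simp
      have a1: "real (card A') \<ge> 1" using True T2 by linarith
      have "real (card A') * (real (card A') - 1) \<ge> (real (card A') - 1)^2"
        using a1 by (simp add: power2_eq_square mult_right_mono)
      moreover have "(real (card A') - 1)^2 = (d - 1)^2 - 2 * (d - 1) * w + w^2"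
        unfolding cA' w_def by (simp add: power2_eq_square algebra_simps)
      moreover have "2 * (d - 1) * w \<le> 2 * d * w" using w0 by (simp add: mult_right_mono)
      moreover have "d * w \<le> 4 * Pn" using Wb2 unfolding w_def .
      moreover have "w^2 \<ge> 0" by simp
      ultimately show ?thesis by linarith
    qed
    ultimately show ?thesis unfolding PB_def B_def Pn_def A_def d_def by linarith
  next
    case False
    then have "real (card W) > d - T" using cA' by linarith
    then have "d * real (card W) \<ge> d * (d - T)" using d0 by (simp add: mult_left_mono)
    then have "4 * Pn \<ge> d * (d - T)" using Wb2 by linarith
    moreover have "d * (d - T) \<ge> d * (3 * d / 4)" using d0 d4 by (intro mult_left_mono) auto
    moreover have "(d - 1)^2 \<le> d * d" using d0 by (simp add: power2_eq_square algebra_simps)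
    moreover have "d * (3 * d / 4) = 3 / 4 * (d * d)" by simp
    moreover have "d * d \<ge> 0" by simp
    ultimately have "(d - 1)^2 \<le> 8 * Pn" by linarith
    moreover have "PB / \<beta> \<ge> 0" using PB0 b by simp
    ultimately show ?thesis unfolding PB_def B_def Pn_def A_def d_def by linarith
  qed
qed



lemma edge_exists:
  assumes "e_count E V > 0"
  shows "\<exists>u v. u \<in> V \<and> v \<in> V \<and> E u v"
proof -
  have "edges_in E V \<noteq> {}" using assms unfolding e_count_def by (metis card.empty less_irrefl)
  then show ?thesis unfolding edges_in_def by auto
qed

lemma density_edge:
  assumes irr: "\<forall>u. \<not> E u u" and e: "E u v"
  shows "density E {u,v} = 1" "card {u,v} = 2"
proof -
  have uv: "u \<noteq> v" using irr e by auto
  have "edges_in E {u,v} = {{u,v}}" unfolding edges_in_def using e irr by auto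
  then have "e_count E {u,v} = 1" unfolding e_count_def by simp
  then show "density E {u,v} = 1" unfolding density_def using uv by (simp add: choose_two)
  show "card {u,v} = 2" using uv by simp
qed



lemma main_count:
  fixes \<alpha> \<beta> T :: real
  assumes fin: "finite V" and sym: "\<forall>u v. E u v \<longrightarrow> E v u" and irr: "\<forall>u. \<not> E u u"
    and nd: "\<forall>X. X \<subseteq> V \<and> card X \<ge> 2 \<and> real (card X) \<ge> T \<longrightarrow> density E X < 1 - \<beta>"
    and T2: "T \<ge> 2" and b: "0 < \<beta>" and b1: "\<beta> < 1" and a: "0 < \<alpha>" and a2: "\<alpha> < 1/2"
    and Tdef: "T = 0.1 * \<alpha>^2 * real (card V)"
    and eV: "real (e_count E V) \<ge> \<alpha> * real (card V)^2"
  shows "real (num_induced_C4 V E) \<ge> \<beta>^2 * \<alpha>^4 * real (card V)^4 / 15360"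
proof -
  define n where "n = real (card V)"
  define cd where "cd p = card (nb E V (fst p) \<inter> nb E V (snd p))" for p :: "'a \<times> 'a"
  define B where "B = {p \<in> NP E V. real (cd p) \<ge> T}"
  define SB where "SB = (\<Sum>p\<in>B. real (cd p))"
  define deg where "deg x = real (card (nb E V x))" for x
  define PB where "PB x = real (card {p \<in> B. fst p \<in> nb E V x \<and> snd p \<in> nb E V x})" for x
  define Px where "Px x = real (card (NP E (nb E V x)))" for x
  have finNP: "finite (NP E V)" using fin by (rule finite_NP)
  have NPV: "NP E V \<subseteq> V \<times> V" unfolding NP_def by auto
  have BNP: "B \<subseteq> NP E V" unfolding B_def by auto
  have finB: "finite B" using finNP BNP finite_subset by blast
  have SB0: "SB \<ge> 0" unfolding SB_def by (simp add: sum_nonneg)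
  have pt: "(deg x - 1)^2 \<le> 16 * T^2 + PB x / \<beta> + 8 * Px x" if "x \<in> V" for x
  proof (cases "deg x \<ge> 4 * T")
    case True
    have "(deg x - 1)^2 \<le> PB x / \<beta> + 8 * Px x"
      using perx[OF fin sym irr nd T2 b, of x] True unfolding deg_def PB_def Px_def B_def cd_def by simp
    moreover have "16 * T^2 \<ge> 0" by simp
    ultimately show ?thesis by linarith
  next
    case False
    have d0: "deg x \<ge> 0" unfolding deg_def by simp
    have "(deg x - 1)^2 \<le> 16 * T^2"
    proof (cases "deg x \<ge> 1")
      case True
      then have "(deg x - 1)^2 \<le> (4 * T)^2" using False by (intro power_mono) auto
      then show ?thesis by (simp add: power_mult_distrib)
    next
      case c: False
      have "(1 - deg x) * (1 - deg x) \<le> 1" using c d0 by (intro mult_le_one) auto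
      moreover have "(deg x - 1)^2 = (1 - deg x) * (1 - deg x)" by (simp add: power2_eq_square algebra_simps)
      ultimately have "(deg x - 1)^2 \<le> 1" by simp
      moreover have "1 \<le> 16 * T^2" proof -
        have "2 * 2 \<le> T * T" using T2 by (intro mult_mono) auto
        then show ?thesis by (simp add: power2_eq_square)
      qed
      ultimately show ?thesis by linarith
    qed
    moreover have "PB x / \<beta> \<ge> 0" "Px x \<ge> 0" unfolding PB_def Px_def using b by auto
    ultimately show ?thesis by linarith
  qed
  have sum_pt: "(\<Sum>x\<in>V. (deg x - 1)^2) \<le> n * (16 * T^2) + (\<Sum>x\<in>V. PB x) / \<beta> + 8 * (\<Sum>x\<in>V. Px x)"
  proof -
    have "(\<Sum>x\<in>V. (deg x - 1)^2) \<le> (\<Sum>x\<in>V. 16 * T^2 + PB x / \<beta> + 8 * Px x)"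
      by (rule sum_mono) (use pt in auto)
    also have "\<dots> = n * (16 * T^2) + (\<Sum>x\<in>V. PB x) / \<beta> + 8 * (\<Sum>x\<in>V. Px x)"
      unfolding n_def by (simp add: sum.distrib sum_divide_distrib sum_distrib_left)
    finally show ?thesis .
  qed
  have sPB: "(\<Sum>x\<in>V. PB x) = SB"
  proof -
    have "(\<Sum>p\<in>B. cd p) = (\<Sum>x\<in>V. card {p\<in>B. fst p \<in> nb E V x \<and> snd p \<in> nb E V x})"
      unfolding cd_def by (rule double_count[OF fin finB _ sym]) (use BNP NPV in auto)
    then have "real (\<Sum>p\<in>B. cd p) = real (\<Sum>x\<in>V. card {p\<in>B. fst p \<in> nb E V x \<and> snd p \<in> nb E V x})" by simp
    then show ?thesis unfolding SB_def PB_def by simp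
  qed
  have sPx: "(\<Sum>x\<in>V. Px x) = (\<Sum>p\<in>NP E V. real (cd p))"
  proof -
    have eq: "NP E (nb E V x) = {p\<in>NP E V. fst p \<in> nb E V x \<and> snd p \<in> nb E V x}" for x
      unfolding NP_def nb_def by auto
    have "(\<Sum>p\<in>NP E V. cd p) = (\<Sum>x\<in>V. card {p\<in>NP E V. fst p \<in> nb E V x \<and> snd p \<in> nb E V x})"
      unfolding cd_def by (rule double_count[OF fin finNP NPV sym])
    then have "real (\<Sum>p\<in>NP E V. cd p) = real (\<Sum>x\<in>V. card {p\<in>NP E V. fst p \<in> nb E V x \<and> snd p \<in> nb E V x})" by simp
    then show ?thesis unfolding Px_def eq by simp
  qed
  have sNP: "(\<Sum>p\<in>NP E V. real (cd p)) \<le> SB + n^2 * T"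
  proof -
    have "(\<Sum>p\<in>NP E V. real (cd p)) = (\<Sum>p\<in>NP E V - B. real (cd p)) + SB"
      unfolding SB_def by (rule sum.subset_diff[OF BNP finNP])
    moreover have "(\<Sum>p\<in>NP E V - B. real (cd p)) \<le> real (card (NP E V - B)) * T"
      by (rule sum_bounded_above) (auto simp: B_def)
    moreover have "card (NP E V - B) \<le> card (V \<times> V)"
      by (rule card_mono) (use fin NPV in auto)
    then have "real (card (NP E V - B)) \<le> n^2" unfolding n_def power2_eq_square by (metis card_cartesian_product of_nat_le_iff of_nat_mult)
    then have "real (card (NP E V - B)) * T \<le> n^2 * T" using T2 by (intro mult_right_mono) auto
    ultimately show ?thesis by linarith
  qed
  have sdeg: "(\<Sum>x\<in>V. deg x) \<ge> 2 * \<alpha> * n^2"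
  proof -
    have "(\<Sum>x\<in>V. card (nb E V x)) = 2 * e_count E V"
      using degree_sum[OF fin] handshake[OF fin sym irr] by simp
    then have "(\<Sum>x\<in>V. deg x) = 2 * real (e_count E V)" unfolding deg_def
      by (metis of_nat_mult of_nat_numeral of_nat_sum)
    then show ?thesis using eV unfolding n_def by simp
  qed
  have low: "(\<Sum>x\<in>V. (deg x - 1)^2) \<ge> 4 * \<alpha> * n * ((\<Sum>x\<in>V. deg x) - n) - n * (4 * \<alpha>^2 * n^2)"
  proof -
    have "(deg x - 1)^2 \<ge> 4 * \<alpha> * n * (deg x - 1) - 4 * \<alpha>^2 * n^2" for x
    proof -
      have "(deg x - 1 - 2 * \<alpha> * n)^2 \<ge> 0" by simp
      then show ?thesis by (simp add: power2_eq_square algebra_simps)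
    qed
    then have "(\<Sum>x\<in>V. (deg x - 1)^2) \<ge> (\<Sum>x\<in>V. 4 * \<alpha> * n * (deg x - 1) - 4 * \<alpha>^2 * n^2)"
      by (intro sum_mono) auto
    moreover have "(\<Sum>x\<in>V. 4 * \<alpha> * n * (deg x - 1) - 4 * \<alpha>^2 * n^2) = 4 * \<alpha> * n * ((\<Sum>x\<in>V. deg x) - n) - n * (4 * \<alpha>^2 * n^2)"
    proof -
      have "(\<Sum>x\<in>V. 4 * \<alpha> * n * (deg x - 1) - 4 * \<alpha>^2 * n^2) = (\<Sum>x\<in>V. 4 * \<alpha> * n * (deg x - 1)) - (\<Sum>x\<in>V. 4 * \<alpha>^2 * n^2)"
        by (rule sum_subtractf)
      also have "\<dots> = 4 * \<alpha> * n * (\<Sum>x\<in>V. deg x - 1) - n * (4 * \<alpha>^2 * n^2)"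
        by (simp add: sum_distrib_left[symmetric] n_def)
      also have "(\<Sum>x\<in>V. deg x - 1) = (\<Sum>x\<in>V. deg x) - n" by (simp add: sum_subtractf n_def)
      finally show ?thesis .
    qed
    ultimately show ?thesis by linarith
  qed
  define K where "K = \<alpha>^2 * n^3"
  have n0: "n \<ge> 0" unfolding n_def by simp
  have a2n: "\<alpha>^2 * n \<ge> 20" using T2 Tdef unfolding n_def by simp
  have an: "\<alpha> * n \<ge> 40"
  proof -
    have "\<alpha>^2 * n = \<alpha> * (\<alpha> * n)" by (simp add: power2_eq_square)
    moreover have "\<alpha> * (\<alpha> * n) \<le> (1/2) * (\<alpha> * n)" using a2 a n0 by (intro mult_right_mono) auto
    ultimately show ?thesis using a2n by linarith
  qed
  have npos: "n > 0" using an a by (smt (verit) mult_nonneg_nonpos)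
  have K0: "K > 0" unfolding K_def using a npos by simp
  have e1: "4 * \<alpha> * n * (2 * \<alpha> * n^2 - n) - n * (4 * \<alpha>^2 * n^2) = 4 * K - 4 * \<alpha> * n^2"
    unfolding K_def by (simp add: power2_eq_square power3_eq_cube algebra_simps)
  have e2: "4 * \<alpha> * n^2 \<le> (1/10) * K"
  proof -
    have "4 * \<alpha> * n^2 * 40 \<le> 4 * \<alpha> * n^2 * (\<alpha> * n)" using an a npos by (intro mult_left_mono) auto
    moreover have "4 * \<alpha> * n^2 * (\<alpha> * n) = 4 * K" unfolding K_def by (simp add: power2_eq_square power3_eq_cube algebra_simps)
    ultimately show ?thesis by linarith
  qed
  have e3: "n * (16 * T^2) \<le> (1/25) * K"
  proof -
    have "n * (16 * T^2) = (4/25) * (\<alpha>^2 * K)" unfolding Tdef K_def n_def by (simp add: power2_eq_square power3_eq_cube algebra_simps)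
    moreover have "\<alpha> * \<alpha> \<le> (1/2) * (1/2)" using a a2 by (intro mult_mono) auto
    then have "\<alpha>^2 * K \<le> (1/4) * K" using K0 by (intro mult_right_mono) (auto simp: power2_eq_square)
    ultimately show ?thesis by linarith
  qed
  have e4: "8 * (n^2 * T) = (4/5) * K" unfolding Tdef K_def n_def by (simp add: power2_eq_square power3_eq_cube algebra_simps)
  have mono1: "4 * \<alpha> * n * (2 * \<alpha> * n^2 - n) \<le> 4 * \<alpha> * n * ((\<Sum>x\<in>V. deg x) - n)"
    using sdeg a npos by (intro mult_left_mono) auto
  have comb: "(153/50) * K \<le> SB / \<beta> + 8 * SB"
  proof -
    have "(\<Sum>x\<in>V. PB x) / \<beta> = SB / \<beta>" using sPB by simp
    then show ?thesis using sum_pt sPx sNP low e1 e2 e3 e4 mono1 by linarith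
  qed
  have "8 * SB \<le> 8 * SB / \<beta>" using SB0 b b1 by (simp add: le_divide_eq mult_left_le)
  then have "(153/50) * K \<le> 9 * SB / \<beta>" using comb by simp
  then have h17: "K * (\<beta> * 17) \<le> SB * 50" using b K0 by (simp add: field_simps)
  have "K * (\<beta> * 17) = 17 * (K * \<beta>)" by simp
  then have "K * \<beta> \<le> SB * 3" using h17 SB0 by linarith
  then have SBb: "SB \<ge> \<beta> * K / 3" by (simp add: field_simps)
  have Q1: "(\<Sum>p\<in>B. real (card (NP E (nb E V (fst p) \<inter> nb E V (snd p))))) \<ge> (\<Sum>p\<in>B. \<beta> * (T / 2) * real (cd p))"
  proof (rule sum_mono)
    fix p assume p: "p \<in> B"
    have CV: "nb E V (fst p) \<inter> nb E V (snd p) \<subseteq> V" unfolding nb_def by auto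
    have cT: "real (cd p) \<ge> T" using p unfolding B_def by auto
    have "real (card (NP E (nb E V (fst p) \<inter> nb E V (snd p)))) \<ge> \<beta> * real (cd p) * (real (cd p) - 1)"
      unfolding cd_def by (rule NP_lower[OF fin sym irr nd CV]) (use cT b in \<open>auto simp: cd_def\<close>)
    moreover have "\<beta> * real (cd p) * (real (cd p) - 1) \<ge> \<beta> * (T / 2) * real (cd p)"
    proof -
      have "real (cd p) - 1 \<ge> T / 2" using cT T2 by linarith
      then have "real (cd p) * (real (cd p) - 1) \<ge> real (cd p) * (T / 2)" by (intro mult_left_mono) auto
      then have "\<beta> * (real (cd p) * (T / 2)) \<le> \<beta> * (real (cd p) * (real (cd p) - 1))" by (rule mult_left_mono[OF _ less_imp_le[OF b]])
      then show ?thesis by (simp add: ac_simps)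
    qed
    ultimately show "real (card (NP E (nb E V (fst p) \<inter> nb E V (snd p)))) \<ge> \<beta> * (T / 2) * real (cd p)" by linarith
  qed
  have Q2: "(\<Sum>p\<in>NP E V. real (card (NP E (nb E V (fst p) \<inter> nb E V (snd p))))) \<ge> (\<Sum>p\<in>B. real (card (NP E (nb E V (fst p) \<inter> nb E V (snd p)))))"
    by (rule sum_mono2[OF finNP BNP]) auto
  have Q3: "(\<Sum>p\<in>NP E V. real (card (NP E (nb E V (fst p) \<inter> nb E V (snd p))))) \<le> 256 * real (num_induced_C4 V E)"
  proof -
    have "(\<Sum>p\<in>NP E V. card (NP E (nb E V (fst p) \<inter> nb E V (snd p)))) \<le> 256 * num_induced_C4 V E"
      by (rule C4_count[OF fin sym irr])
    then have "real (\<Sum>p\<in>NP E V. card (NP E (nb E V (fst p) \<inter> nb E V (snd p)))) \<le> real (256 * num_induced_C4 V E)"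
      by (simp only: of_nat_le_iff)
    then show ?thesis by simp
  qed
  have Q4: "(\<Sum>p\<in>B. \<beta> * (T / 2) * real (cd p)) = \<beta> * (T / 2) * SB" unfolding SB_def by (simp add: sum_distrib_left)
  have "\<beta> * (T / 2) * SB \<ge> \<beta> * (T / 2) * (\<beta> * K / 3)" using SBb b T2 by (intro mult_left_mono) auto
  moreover have "\<beta> * (T / 2) * (\<beta> * K / 3) = 256 * (\<beta>^2 * \<alpha>^4 * n^4 / 15360)"
    unfolding Tdef K_def n_def by (simp add: eval_nat_numeral algebra_simps)
  ultimately have "256 * (\<beta>^2 * \<alpha>^4 * n^4 / 15360) \<le> 256 * real (num_induced_C4 V E)"
    using Q1 Q2 Q3 Q4 by linarith
  then show ?thesis unfolding n_def by simp
qed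



theorem lemma3p3:
  "\<exists>c0::real. c0 > 0 \<and>
    (\<forall>(\<alpha>::real) (\<beta>::real) (V::nat set) (E::nat \<Rightarrow> nat \<Rightarrow> bool).
      0 < \<alpha> \<and> \<alpha> < 1/2 \<and> 0 < \<beta> \<and> \<beta> < 1 \<and> simple_graph V E \<and>
      real (e_count E V) \<ge> \<alpha> * real (card V) ^ 2 \<longrightarrow>
        real (num_induced_C4 V E) \<ge> c0 * \<alpha> ^ 80 * \<beta> ^ 20 * real (card V) ^ 4 \<or>
        (\<exists>X. X \<subseteq> V \<and> card X \<ge> 2 \<and> real (card X) \<ge> 0.1 * \<alpha> ^ 2 * real (card V) \<and>
             density E X \<ge> 1 - \<beta>))"
proof (intro exI[of _ "1/15360"] conjI allI impI)
  show "(1/15360::real) > 0" by simp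
  fix \<alpha> \<beta> :: real and V :: "nat set" and E :: "nat \<Rightarrow> nat \<Rightarrow> bool"
  assume H: "0 < \<alpha> \<and> \<alpha> < 1/2 \<and> 0 < \<beta> \<and> \<beta> < 1 \<and> simple_graph V E \<and>
      real (e_count E V) \<ge> \<alpha> * real (card V) ^ 2"
  then have a: "0 < \<alpha>" and a2: "\<alpha> < 1/2" and b: "0 < \<beta>" and b1: "\<beta> < 1"
    and eV: "real (e_count E V) \<ge> \<alpha> * real (card V) ^ 2" by auto
  from H have fin: "finite V" and sym: "\<forall>u v. E u v \<longrightarrow> E v u" and irr: "\<forall>u. \<not> E u u"
    unfolding simple_graph_def by auto
  define T where "T = 0.1 * \<alpha> ^ 2 * real (card V)"
  show "real (num_induced_C4 V E) \<ge> 1/15360 * \<alpha> ^ 80 * \<beta> ^ 20 * real (card V) ^ 4 \<or>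
        (\<exists>X. X \<subseteq> V \<and> card X \<ge> 2 \<and> real (card X) \<ge> 0.1 * \<alpha> ^ 2 * real (card V) \<and>
             density E X \<ge> 1 - \<beta>)"
  proof (cases "\<exists>X. X \<subseteq> V \<and> card X \<ge> 2 \<and> real (card X) \<ge> 0.1 * \<alpha> ^ 2 * real (card V) \<and>
             density E X \<ge> 1 - \<beta>")
    case True then show ?thesis by blast
  next
    case False
    then have nd: "\<forall>X. X \<subseteq> V \<and> card X \<ge> 2 \<and> real (card X) \<ge> T \<longrightarrow> density E X < 1 - \<beta>"
      unfolding T_def by (auto simp: not_le)
    show ?thesis
    proof (cases "card V = 0")
      case True then show ?thesis by simp
    next
      case cV: False
      have T2: "T \<ge> 2"
      proof (rule ccontr)
        assume "\<not> T \<ge> 2"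
        then have Tl: "T < 2" by simp
        have "\<alpha> * real (card V) ^ 2 > 0" using a cV by simp
        then have "e_count E V > 0" using eV by linarith
        then obtain u v where uv: "u \<in> V" "v \<in> V" "E u v" using edge_exists by blast
        have dd: "density E {u,v} = 1" "card {u,v} = 2" using density_edge[of E u v, OF irr uv(3)] by auto
        have sub: "{u,v} \<subseteq> V" using uv by auto
        have "real (card {u,v}) \<ge> T" using dd(2) Tl by simp
        then have "density E {u,v} < 1 - \<beta>" using nd sub dd(2) by auto
        then show False using density_edge[of E u v, OF irr uv(3)] b by simp
      qed
      have main: "real (num_induced_C4 V E) \<ge> \<beta>^2 * \<alpha>^4 * real (card V)^4 / 15360"
        by (rule main_count[OF fin sym irr nd T2 b b1 a a2 T_def eV])
      have p1: "\<alpha> ^ 80 \<le> \<alpha> ^ 4" using a a2 by (intro power_decreasing) auto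
      have p2: "\<beta> ^ 20 \<le> \<beta> ^ 2" using b b1 by (intro power_decreasing) auto
      have "\<alpha> ^ 80 * \<beta> ^ 20 \<le> \<alpha> ^ 4 * \<beta> ^ 2" using p1 p2 a b by (intro mult_mono) auto
      then have "\<alpha> ^ 80 * \<beta> ^ 20 * real (card V) ^ 4 \<le> \<alpha> ^ 4 * \<beta> ^ 2 * real (card V) ^ 4"
        by (intro mult_right_mono) auto
      then have "1/15360 * \<alpha> ^ 80 * \<beta> ^ 20 * real (card V) ^ 4 \<le> \<beta>^2 * \<alpha>^4 * real (card V)^4 / 15360"
        by (simp add: ac_simps)
      then show ?thesis using main by linarith
    qed
  qed
qed


end
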